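(* Let $d\ge2$ and let $\rho$ be a diagonal symmetric state on $\mathbb{C}^d\otimes\mathbb{C}^d$ that is PPT, with associated matrix $M=M(\rho)$. Let $\mathbf{x}\in\mathbb{R}^d$ with $x_i>0$ for all $i$, let $\|\mathbf{x}\|_1=\sum_i x_i$, let $\ket{u_{\mathbf{x}}}=\mathbf{x}/\|\mathbf{x}\|_1$, and let $M^{+}$ denote the Moore–Penrose pseudo-inverse of $M$. Suppose there exists $\lambda\in[0,1)$ such that (1) $\lambda\le M_{ij}\|\mathbf{x}\|_1^2/(x_ix_j)$ for all $i,j$; (2) $\ket{u_{\mathbf{x}}}$ lies in the range of $M$ and $\lambda\le 1/\bra{u_{\mathbf{x}}}M^{+}\ket{u_{\mathbf{x}}}$; (3) $\lambda x_i(\|\mathbf{x}\|_1-2x_i)\ge\|\mathbf{x}\|_1^2\left[\sum_{j\ne i}M_{ij}-M_{ii}\right]$ for all $i$. Then $\rho$ is separable; equivalently, $M(\rho)$ is completely positive.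
   Context: Let $\{\ket{0},\dots,\ket{d-1}\}$ be the computational basis of $\mathbb{C}^d$. Define $\ket{D_{ii}}=\ket{ii}$ and, for $i<j$, $\ket{D_{ij}}=(\ket{ij}+\ket{ji})/\sqrt{2}$. A state $\rho$ on $\mathbb{C}^d\otimes\mathbb{C}^d$ is diagonal symmetric (DS) if $\rho=\sum_{0\le i\le j<d}p_{ij}\ket{D_{ij}}\bra{D_{ij}}$ with $p_{ij}\ge 0$ and $\sum_{i\le j}p_{ij}=1$; set $p_{ji}=p_{ij}$. Its associated matrix $M(\rho)$ is the real symmetric $d\times d$ matrix with $M(\rho)_{ii}=p_{ii}$ and $M(\rho)_{ij}=p_{ij}/2$ for $i\ne j$. $\rho$ is PPT if its partial transpose with respect to the computational basis of the second factor is positive semidefinite. A state is separable if it is a convex combination of product states $\rho^A\otimes\rho^B$. A real $d\times d$ matrix $A$ is completely positive if $A=BB^T$ for some real $d\times k$ matrix $B$ with non-negative entries. *)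

theory Defs
  imports Complex_Main
begin

text \<open>Conventions: d is the local dimension; the computational basis of C^d is indexed by
  0..d-1.  Vectors in C^d are functions nat => complex (only indices < d matter); vectors in
  C^d (x) C^d are functions on pairs (i,j) (basis vector |ij>); operators are kernels
  A a b = <a|A|b>.\<close>

definition psd_on :: "'a set \<Rightarrow> ('a \<Rightarrow> 'a \<Rightarrow> complex) \<Rightarrow> bool" where
  "psd_on I A \<longleftrightarrow> (\<forall>v :: 'a \<Rightarrow> complex.
     Im (\<Sum>a\<in>I. \<Sum>b\<in>I. cnj (v a) * A a b * v b) = 0 \<and>
     Re (\<Sum>a\<in>I. \<Sum>b\<in>I. cnj (v a) * A a b * v b) \<ge> 0)"

definition is_state_on :: "'a set \<Rightarrow> ('a \<Rightarrow> 'a \<Rightarrow> complex) \<Rightarrow> bool" where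
  "is_state_on I A \<longleftrightarrow> psd_on I A \<and> (\<Sum>a\<in>I. A a a) = 1"

abbreviation bip :: "nat \<Rightarrow> (nat \<times> nat) set" where
  "bip d \<equiv> {..<d} \<times> {..<d}"

definition dicke :: "nat \<Rightarrow> nat \<Rightarrow> nat \<times> nat \<Rightarrow> complex" where
  "dicke i j = (if i = j then (\<lambda>a. if a = (i, i) then 1 else 0)
                else (\<lambda>a. if a = (i, j) \<or> a = (j, i) then complex_of_real (1 / sqrt 2) else 0))"

definition ds_rho :: "nat \<Rightarrow> (nat \<Rightarrow> nat \<Rightarrow> real) \<Rightarrow> nat \<times> nat \<Rightarrow> nat \<times> nat \<Rightarrow> complex" where
  "ds_rho d p = (\<lambda>a b. \<Sum>(i, j) \<in> {(i, j). i \<le> j \<and> j < d}.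
       complex_of_real (p i j) * dicke i j a * cnj (dicke i j b))"

definition ds_coeffs :: "nat \<Rightarrow> (nat \<Rightarrow> nat \<Rightarrow> real) \<Rightarrow> bool" where
  "ds_coeffs d p \<longleftrightarrow> (\<forall>i j. p i j = p j i) \<and> (\<forall>i<d. \<forall>j<d. p i j \<ge> 0) \<and>
     (\<Sum>(i, j) \<in> {(i, j). i \<le> j \<and> j < d}. p i j) = 1"

definition assoc_mat :: "(nat \<Rightarrow> nat \<Rightarrow> real) \<Rightarrow> nat \<Rightarrow> nat \<Rightarrow> real" where
  "assoc_mat p i j = (if i = j then p i i else p i j / 2)"

definition partial_transpose :: "(nat \<times> nat \<Rightarrow> nat \<times> nat \<Rightarrow> complex) \<Rightarrow> nat \<times> nat \<Rightarrow> nat \<times> nat \<Rightarrow> complex" where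
  "partial_transpose A = (\<lambda>(i, j) (k, l). A (i, l) (k, j))"

definition PPT :: "nat \<Rightarrow> (nat \<times> nat \<Rightarrow> nat \<times> nat \<Rightarrow> complex) \<Rightarrow> bool" where
  "PPT d A \<longleftrightarrow> psd_on (bip d) (partial_transpose A)"

definition separable :: "nat \<Rightarrow> (nat \<times> nat \<Rightarrow> nat \<times> nat \<Rightarrow> complex) \<Rightarrow> bool" where
  "separable d A \<longleftrightarrow> (\<exists>(n::nat) (w :: nat \<Rightarrow> real) (RA :: nat \<Rightarrow> nat \<Rightarrow> nat \<Rightarrow> complex) RB.
     (\<forall>m<n. w m \<ge> 0 \<and> is_state_on {..<d} (RA m) \<and> is_state_on {..<d} (RB m)) \<and>
     (\<Sum>m<n. w m) = 1 \<and>
     (\<forall>i<d. \<forall>j<d. \<forall>k<d. \<forall>l<d.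
        A (i, j) (k, l) = (\<Sum>m<n. complex_of_real (w m) * RA m i k * RB m j l)))"

definition completely_positive :: "nat \<Rightarrow> (nat \<Rightarrow> nat \<Rightarrow> real) \<Rightarrow> bool" where
  "completely_positive d A \<longleftrightarrow> (\<exists>(k::nat) (B :: nat \<Rightarrow> nat \<Rightarrow> real).
     (\<forall>i<d. \<forall>l<k. B i l \<ge> 0) \<and>
     (\<forall>i<d. \<forall>j<d. A i j = (\<Sum>l<k. B i l * B j l)))"

definition matmul :: "nat \<Rightarrow> (nat \<Rightarrow> nat \<Rightarrow> real) \<Rightarrow> (nat \<Rightarrow> nat \<Rightarrow> real) \<Rightarrow> nat \<Rightarrow> nat \<Rightarrow> real" where
  "matmul d A B = (\<lambda>i j. \<Sum>k<d. A i k * B k j)"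

definition is_pinv :: "nat \<Rightarrow> (nat \<Rightarrow> nat \<Rightarrow> real) \<Rightarrow> (nat \<Rightarrow> nat \<Rightarrow> real) \<Rightarrow> bool" where
  "is_pinv d A P \<longleftrightarrow> (\<forall>i j. (d \<le> i \<or> d \<le> j) \<longrightarrow> P i j = 0) \<and>
     (\<forall>i<d. \<forall>j<d.
        matmul d (matmul d A P) A i j = A i j \<and>
        matmul d (matmul d P A) P i j = P i j \<and>
        matmul d A P i j = matmul d A P j i \<and>
        matmul d P A i j = matmul d P A j i)"

definition pinv :: "nat \<Rightarrow> (nat \<Rightarrow> nat \<Rightarrow> real) \<Rightarrow> nat \<Rightarrow> nat \<Rightarrow> real" where
  "pinv d A = (THE P. is_pinv d A P)"

definition in_range :: "nat \<Rightarrow> (nat \<Rightarrow> nat \<Rightarrow> real) \<Rightarrow> (nat \<Rightarrow> real) \<Rightarrow> bool" where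
  "in_range d A u \<longleftrightarrow> (\<exists>y :: nat \<Rightarrow> real. \<forall>i<d. (\<Sum>j<d. A i j * y j) = u i)"

end

theory Submission
  imports Defs
begin

definition dg :: "nat \<Rightarrow> nat \<Rightarrow> nat" where
  "dg m t = (m div 4 ^ t) mod 4"

lemma sum_mult4:
  fixes f :: "nat \<Rightarrow> complex"
  shows "(\<Sum>m<4 * N. f m) = (\<Sum>q<N. \<Sum>r<4. f (4 * q + r))"
proof (induction N)
  case 0
  then show ?case by simp
next
  case (Suc N)
  have "{..<4 * Suc N} = {..<4*N} \<union> {4*N..<4*N+4}" by auto
  then have "(\<Sum>m<4 * Suc N. f m) = (\<Sum>m<4*N. f m) + (\<Sum>m\<in>{4*N..<4*N+4}. f m)"
    by (simp add: sum.union_disjoint ivl_disj_int_one(2))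
  also have "(\<Sum>m\<in>{4*N..<4*N+4}. f m) = (\<Sum>r<4. f (4 * N + r))"
    by (simp add: numeral_eq_Suc add.commute)
  finally show ?case using Suc by simp
qed

lemma dig_prod_sum:
  fixes g :: "nat \<Rightarrow> nat \<Rightarrow> complex"
  shows "(\<Sum>m<4^d. \<Prod>t<d. g t (dg m t)) = (\<Prod>t<d. \<Sum>r<4. g t r)"
proof (induction d arbitrary: g)
  case 0
  then show ?case by simp
next
  case (Suc d)
  have dsuc: "dg m (Suc t) = dg (m div 4) t" for m t
    by (simp add: dg_def div_mult2_eq)
  have d0: "dg m 0 = m mod 4" for m by (simp add: dg_def)
  have "(\<Sum>m<4^Suc d. \<Prod>t<Suc d. g t (dg m t))
      = (\<Sum>m<4 * 4^d. g 0 (m mod 4) * (\<Prod>t<d. g (Suc t) (dg (m div 4) t)))"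
    by (subst prod.lessThan_Suc_shift) (simp add: dsuc d0 del: prod.lessThan_Suc)
  also have "\<dots> = (\<Sum>q<4^d. \<Sum>r<4. g 0 r * (\<Prod>t<d. g (Suc t) (dg q t)))"
    by (subst sum_mult4) simp
  also have "\<dots> = (\<Sum>q<4^d. (\<Sum>r<4. g 0 r) * (\<Prod>t<d. g (Suc t) (dg q t)))"
    by (simp add: sum_distrib_right)
  also have "\<dots> = (\<Sum>r<4. g 0 r) * (\<Prod>t<d. \<Sum>r<4. g (Suc t) r)"
    using Suc.IH[of "\<lambda>t. g (Suc t)"] by (simp add: sum_distrib_left[symmetric])
  also have "\<dots> = (\<Prod>t<Suc d. \<Sum>r<4. g t r)"
    by (subst prod.lessThan_Suc_shift) (simp del: prod.lessThan_Suc)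
  finally show ?case .
qed

lemma phase_sum:
  assumes "e1 \<le> 2" "e2 \<le> (2::nat)"
  shows "(\<Sum>r<4. (\<i>^r)^e1 * (cnj (\<i>^r))^e2) = (if e1 = e2 then 4 else (0::complex))"
proof -
  have s4: "(\<Sum>r<(4::nat). f r) = f 0 + f 1 + f 2 + (f 3 :: complex)" for f
    by (simp add: numeral_eq_Suc)
  have "e1 \<in> {0,1,2}" "e2 \<in> {0,1,2}" using assms by auto
  then show ?thesis
    unfolding s4 by (auto simp: power2_eq_square power3_eq_cube)
qed

lemma pow_ind: "(z::complex) ^ (if P then 1 else 0) = (if P then z else 1)"
  by simp

lemma prod4:
  fixes A B :: "nat \<Rightarrow> complex"
  assumes "i < d" "j < d" "k < d" "l < d"
  shows "(\<Prod>t<d. A t ^ ((if t = i then 1 else 0) + (if t = j then 1 else 0)) *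
                 B t ^ ((if t = k then 1 else 0) + (if t = l then 1 else 0))) = A i * A j * B k * B l"
  using assms by (simp add: power_add prod.distrib pow_ind prod.delta)

lemma ind_eq:
  fixes i j k l :: nat
  assumes "i < d" "j < d" "k < d" "l < d"
  shows "(\<forall>t<d. (if t = i then 1 else 0) + (if t = j then 1 else 0) =
              (if t = k then 1 else (0::nat)) + (if t = l then 1 else 0))
     \<longleftrightarrow> ((k = i \<and> l = j) \<or> (k = j \<and> l = i))"
proof
  assume H: "\<forall>t<d. (if t = i then 1 else 0) + (if t = j then 1 else 0) =
              (if t = k then 1 else (0::nat)) + (if t = l then 1 else 0)"
  note hi = H[rule_format, OF assms(1)]
  note hj = H[rule_format, OF assms(2)]
  note hk = H[rule_format, OF assms(3)]
  show "(k = i \<and> l = j) \<or> (k = j \<and> l = i)"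
    using hi hj hk by (cases "i = j"; cases "k = i"; cases "l = i"; cases "k = j"; cases "l = j"; simp)
qed auto

lemma prod_if4:
  "(\<Prod>t<d. if P t then 4 else (0::complex)) = (if (\<forall>t<d. P t) then 4 ^ d else 0)"
proof (cases "\<forall>t<d. P t")
  case True
  then have "(\<Prod>t<d. if P t then 4 else (0::complex)) = (\<Prod>t<d. 4)"
    by (intro prod.cong) auto
  then show ?thesis using True by simp
next
  case False
  then obtain t where "t < d" "\<not> P t" by auto
  then show ?thesis using False by (intro trans[OF prod_zero]) auto
qed

lemma phase_avg:
  assumes "i < d" "j < d" "k < d" "l < d"
  shows "(\<Sum>m<4^d. \<i>^dg m i * cnj (\<i>^dg m k) * \<i>^dg m j * cnj (\<i>^dg m l))
       = (if (k = i \<and> l = j) \<or> (k = j \<and> l = i) then 4^d else 0)"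
proof -
  define e1 where "e1 t = (if t = i then 1 else 0) + (if t = j then 1 else (0::nat))" for t
  define e2 where "e2 t = (if t = k then 1 else 0) + (if t = l then 1 else (0::nat))" for t
  have "(\<Sum>m<4^d. \<i>^dg m i * cnj (\<i>^dg m k) * \<i>^dg m j * cnj (\<i>^dg m l))
      = (\<Sum>m<4^d. \<Prod>t<d. (\<i>^dg m t)^e1 t * (cnj (\<i>^dg m t))^e2 t)"
    unfolding e1_def e2_def
    by (intro sum.cong refl, subst prod4[OF assms]) (simp add: mult_ac)
  also have "\<dots> = (\<Prod>t<d. \<Sum>r<4. (\<i>^r)^e1 t * (cnj (\<i>^r))^e2 t)"
    by (rule dig_prod_sum)
  also have "\<dots> = (\<Prod>t<d. if e1 t = e2 t then 4 else 0)"
    by (intro prod.cong refl phase_sum) (auto simp: e1_def e2_def)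
  also have "\<dots> = (if (\<forall>t<d. e1 t = e2 t) then 4 ^ d else 0)"
    by (rule prod_if4)
  also have "\<dots> = (if (k = i \<and> l = j) \<or> (k = j \<and> l = i) then 4^d else 0)"
    using ind_eq[OF assms] unfolding e1_def e2_def by simp
  finally show ?thesis .
qed

definition phst :: "nat \<Rightarrow> (nat \<Rightarrow> real) \<Rightarrow> nat \<Rightarrow> nat \<Rightarrow> nat \<Rightarrow> complex" where
  "phst d b m = (\<lambda>a c. if (\<Sum>i<d. b i) > 0
     then complex_of_real (sqrt (b a) * sqrt (b c) / (\<Sum>i<d. b i)) * \<i>^dg m a * cnj (\<i>^dg m c)
     else (if a = 0 \<and> c = 0 then 1 else 0))"

lemma ii_unit: "\<i>^n * cnj (\<i>^n) = 1"
proof -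
  have "\<i>^n * cnj (\<i>^n) = (\<i> * cnj \<i>)^n" by (simp only: complex_cnj_power power_mult_distrib)
  also have "\<dots> = 1" by simp
  finally show ?thesis .
qed

lemma ii_unit2: "\<i>^n * (- \<i>)^n = 1"
  using ii_unit[of n] by simp

lemma phst_state:
  assumes d: "0 < d" and b: "\<forall>i<d. b i \<ge> 0"
  shows "is_state_on {..<d} (phst d b m)"
proof (cases "(\<Sum>i<d. b i) > 0")
  case False
  have "psd_on {..<d} (phst d b m)"
    unfolding psd_on_def
  proof
    fix v :: "nat \<Rightarrow> complex"
    have pt: "cnj (v a) * phst d b m a c * v c = (if c = 0 then (if a = 0 then cnj (v 0) * v 0 else 0) else 0)" for a c
      using False by (simp add: phst_def)
    have "(\<Sum>a<d. \<Sum>c<d. cnj (v a) * phst d b m a c * v c) = cnj (v 0) * v 0"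
      using d by (simp only: pt) (simp add: sum.delta)
    also have "\<dots> = complex_of_real ((cmod (v 0))^2)"
      by (subst complex_norm_square) (simp add: mult.commute)
    finally show "Im (\<Sum>a<d. \<Sum>c<d. cnj (v a) * phst d b m a c * v c) = 0 \<and>
        0 \<le> Re (\<Sum>a<d. \<Sum>c<d. cnj (v a) * phst d b m a c * v c)" by simp
  qed
  moreover have "(\<Sum>a<d. phst d b m a a) = 1"
    using False d by (simp add: phst_def)
  ultimately show ?thesis unfolding is_state_on_def by simp
next
  case True
  define T where "T = (\<Sum>i<d. b i)"
  have T: "T > 0" using True T_def by simp
  have ph: "phst d b m a c = complex_of_real (sqrt (b a) * sqrt (b c) / T) * \<i>^dg m a * cnj (\<i>^dg m c)" for a c
    using True by (simp add: phst_def T_def)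
  have "psd_on {..<d} (phst d b m)"
    unfolding psd_on_def
  proof
    fix v :: "nat \<Rightarrow> complex"
    define z where "z = (\<Sum>c<d. complex_of_real (sqrt (b c)) * cnj (\<i>^dg m c) * v c)"
    have cz: "cnj z = (\<Sum>a<d. cnj (v a) * complex_of_real (sqrt (b a)) * \<i>^dg m a)"
      unfolding z_def by (simp add: cnj_sum mult_ac)
    have "(\<Sum>a<d. \<Sum>c<d. cnj (v a) * phst d b m a c * v c)
        = (\<Sum>a<d. \<Sum>c<d. (cnj (v a) * complex_of_real (sqrt (b a)) * \<i>^dg m a) *
              (complex_of_real (sqrt (b c)) * cnj (\<i>^dg m c) * v c) / complex_of_real T)"
      by (intro sum.cong refl) (simp add: ph mult_ac)
    also have "\<dots> = (\<Sum>a<d. cnj (v a) * complex_of_real (sqrt (b a)) * \<i>^dg m a) *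
        (\<Sum>c<d. complex_of_real (sqrt (b c)) * cnj (\<i>^dg m c) * v c) / complex_of_real T"
      by (simp only: sum_product sum_divide_distrib)
    also have "\<dots> = cnj z * z / complex_of_real T"
      by (subst cz) (simp only: z_def)
    also have "\<dots> = complex_of_real ((cmod z)^2) / complex_of_real T"
      by (subst complex_norm_square) (simp add: mult.commute)
    also have "\<dots> = complex_of_real ((cmod z)^2 / T)"
      by simp
    finally show "Im (\<Sum>a<d. \<Sum>c<d. cnj (v a) * phst d b m a c * v c) = 0 \<and>
        0 \<le> Re (\<Sum>a<d. \<Sum>c<d. cnj (v a) * phst d b m a c * v c)" using T by simp
  qed
  moreover have "(\<Sum>a<d. phst d b m a a) = 1"
  proof -
    have "(\<Sum>a<d. phst d b m a a) = (\<Sum>a<d. complex_of_real (b a / T))"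
      using b by (intro sum.cong refl) (simp add: ph mult.assoc ii_unit2)
    also have "\<dots> = complex_of_real (T / T)"
      by (simp only: of_real_sum[symmetric] sum_divide_distrib[symmetric] T_def)
    finally show ?thesis using T by simp
  qed
  ultimately show ?thesis unfolding is_state_on_def by simp
qed

lemma rank1_decomp:
  assumes b: "\<forall>t<d. b t \<ge> 0" and idx: "i < d" "j < d" "k < d" "l < d"
  shows "(\<Sum>m<4^d. complex_of_real ((\<Sum>t<d. b t)^2 / 4^d) * phst d b m i k * phst d b m j l)
       = complex_of_real (b i * b j) * (if (k = i \<and> l = j) \<or> (k = j \<and> l = i) then 1 else 0)"
proof (cases "(\<Sum>t<d. b t) > 0")
  case False
  have "(\<Sum>t<d. b t) \<ge> 0" using b by (intro sum_nonneg) auto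
  then have "(\<Sum>t<d. b t) = 0" using False by linarith
  then have "\<forall>t<d. b t = 0" using sum_nonneg_eq_0_iff[of "{..<d}" b] b by auto
  then show ?thesis using idx \<open>(\<Sum>t<d. b t) = 0\<close> by simp
next
  case True
  define T where "T = (\<Sum>t<d. b t)"
  have T: "T > 0" using True T_def by simp
  define s where "s t = sqrt (b t)" for t
  have ph: "phst d b m a c = complex_of_real (s a * s c / T) * \<i>^dg m a * cnj (\<i>^dg m c)" for m a c
    using True by (simp add: phst_def T_def s_def)
  have "(\<Sum>m<4^d. complex_of_real (T^2 / 4^d) * phst d b m i k * phst d b m j l)
      = (\<Sum>m<4^d. complex_of_real (s i * s k * s j * s l / 4^d) *
            (\<i>^dg m i * cnj (\<i>^dg m k) * \<i>^dg m j * cnj (\<i>^dg m l)))"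
  proof (intro sum.cong refl)
    fix m
    have E: "complex_of_real (T^2 / 4^d) * complex_of_real (s i * s k / T) * complex_of_real (s j * s l / T)
        = complex_of_real (s i * s k * s j * s l / 4^d)"
      unfolding of_real_mult[symmetric] using T by (simp add: field_simps power2_eq_square)
    then show "complex_of_real (T^2 / 4^d) * phst d b m i k * phst d b m j l
      = complex_of_real (s i * s k * s j * s l / 4^d) *
            (\<i>^dg m i * cnj (\<i>^dg m k) * \<i>^dg m j * cnj (\<i>^dg m l))"
      unfolding ph
    proof -
      have "complex_of_real (T\<^sup>2 / 4 ^ d) *
        (complex_of_real (s i * s k / T) * \<i> ^ dg m i * cnj (\<i> ^ dg m k)) *
        (complex_of_real (s j * s l / T) * \<i> ^ dg m j * cnj (\<i> ^ dg m l))
        = (complex_of_real (T^2 / 4^d) * complex_of_real (s i * s k / T) * complex_of_real (s j * s l / T)) *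
            (\<i>^dg m i * cnj (\<i>^dg m k) * \<i>^dg m j * cnj (\<i>^dg m l))"
        by (simp only: mult_ac)
      then show "complex_of_real (T\<^sup>2 / 4 ^ d) *
        (complex_of_real (s i * s k / T) * \<i> ^ dg m i * cnj (\<i> ^ dg m k)) *
        (complex_of_real (s j * s l / T) * \<i> ^ dg m j * cnj (\<i> ^ dg m l))
        = complex_of_real (s i * s k * s j * s l / 4^d) *
            (\<i>^dg m i * cnj (\<i>^dg m k) * \<i>^dg m j * cnj (\<i>^dg m l))"
        by (simp only: E)
    qed
  qed
  also have "\<dots> = complex_of_real (s i * s k * s j * s l / 4^d) *
       (if (k = i \<and> l = j) \<or> (k = j \<and> l = i) then 4^d else 0)"
    by (simp only: sum_distrib_left[symmetric] phase_avg[OF idx])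
  also have "\<dots> = complex_of_real (b i * b j) * (if (k = i \<and> l = j) \<or> (k = j \<and> l = i) then 1 else 0)"
  proof -
    have si: "s t * s t = b t" if "t < d" for t using b that by (simp add: s_def)
    show ?thesis
    proof (cases "(k = i \<and> l = j) \<or> (k = j \<and> l = i)")
      case True
      then have "s i * s k * s j * s l = (s i * s i) * (s j * s j)" by (auto simp: mult_ac)
      then have "s i * s k * s j * s l = b i * b j" using si idx by simp
      then show ?thesis using True by (simp only: if_P[OF True]) simp
    next
      case False
      show ?thesis by (simp only: if_not_P[OF False] mult_zero_right)
    qed
  qed
  finally show ?thesis unfolding T_def .
qed

lemma sum_single:
  assumes "finite S" "c \<in> S" "\<forall>x\<in>S. x \<noteq> c \<longrightarrow> f x = 0"
  shows "sum f S = f c"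
proof -
  have "sum f S = f c + sum f (S - {c})" using assms by (simp add: sum.remove)
  also have "sum f (S - {c}) = 0" using assms by (intro sum.neutral) auto
  finally show ?thesis by simp
qed

lemma finS: "finite {(a, b). a \<le> b \<and> b < (d::nat)}"
  by (rule finite_subset[of _ "{..<d} \<times> {..<d}"]) auto

lemma ds_entry:
  assumes p: "ds_coeffs d p" and idx: "i < d" "j < d" "k < d" "l < d"
  shows "ds_rho d p (i, j) (k, l) = complex_of_real (assoc_mat p i j) *
           (if (k = i \<and> l = j) \<or> (k = j \<and> l = i) then 1 else 0)"
proof -
  have sym: "p a b = p b a" for a b using p by (simp add: ds_coeffs_def)
  define c where "c = (min i j, max i j)"
  let ?f = "\<lambda>(a, b). complex_of_real (p a b) * dicke a b (i, j) * cnj (dicke a b (k, l))"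
  have "ds_rho d p (i, j) (k, l) = (\<Sum>x\<in>{(a, b). a \<le> b \<and> b < d}. ?f x)"
    by (simp add: ds_rho_def)
  also have "\<dots> = ?f c"
  proof (rule sum_single[OF finS])
    show "c \<in> {(a, b). a \<le> b \<and> b < d}" using idx by (auto simp: c_def)
    show "\<forall>x\<in>{(a, b). a \<le> b \<and> b < d}. x \<noteq> c \<longrightarrow> ?f x = 0"
      by (auto simp: c_def dicke_def min_def max_def)
  qed
  also have "\<dots> = complex_of_real (assoc_mat p i j) *
           (if (k = i \<and> l = j) \<or> (k = j \<and> l = i) then 1 else 0)"
  proof -
    have h: "complex_of_real (1 / sqrt 2) * complex_of_real (1 / sqrt 2) = 1 / 2"
      by (simp flip: of_real_mult)
    consider "i = j" | "i < j" | "j < i" by linarith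
    then show ?thesis
    proof cases
      case 1
      then show ?thesis by (auto simp: c_def dicke_def assoc_mat_def)
    next
      case 2
      then show ?thesis using h by (auto simp: c_def dicke_def assoc_mat_def)
    next
      case 3
      then show ?thesis using h by (auto simp: c_def dicke_def assoc_mat_def sym)
    qed
  qed
  finally show ?thesis .
qed

lemma dicke_norm:
  assumes "a \<le> b" "b < d"
  shows "(\<Sum>y\<in>bip d. dicke a b y * cnj (dicke a b y)) = 1"
proof (cases "a = b")
  case True
  have "dicke a b y * cnj (dicke a b y) = (if y = (a, a) then 1 else 0)" for y
    using True by (simp add: dicke_def)
  then show ?thesis using assms True by (simp add: sum.delta')
next
  case False
  have h: "complex_of_real (1 / sqrt 2) * complex_of_real (1 / sqrt 2) = 1 / 2"
    by (simp flip: of_real_mult)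
  have "dicke a b y * cnj (dicke a b y) = (if y = (a, b) then 1/2 else 0) + (if y = (b, a) then 1/2 else 0)" for y
    using False h by (auto simp: dicke_def)
  then have "(\<Sum>y\<in>bip d. dicke a b y * cnj (dicke a b y))
     = (\<Sum>y\<in>bip d. (if y = (a, b) then 1/2 else 0)) + (\<Sum>y\<in>bip d. (if y = (b, a) then 1/2 else 0))"
    by (simp add: sum.distrib)
  also have "\<dots> = 1" using assms by (simp add: sum.delta')
  finally show ?thesis .
qed

lemma ds_trace:
  assumes p: "ds_coeffs d p"
  shows "(\<Sum>i<d. \<Sum>j<d. ds_rho d p (i, j) (i, j)) = 1"
proof -
  let ?S = "{(a, b). a \<le> b \<and> b < d}"
  have "(\<Sum>i<d. \<Sum>j<d. ds_rho d p (i, j) (i, j)) = (\<Sum>y\<in>bip d. ds_rho d p y y)"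
    by (simp add: sum.cartesian_product)
  also have "\<dots> = (\<Sum>y\<in>bip d. \<Sum>x\<in>?S. complex_of_real (p (fst x) (snd x)) *
        (dicke (fst x) (snd x) y * cnj (dicke (fst x) (snd x) y)))"
    by (simp add: ds_rho_def case_prod_beta mult.assoc)
  also have "\<dots> = (\<Sum>x\<in>?S. complex_of_real (p (fst x) (snd x)) *
        (\<Sum>y\<in>bip d. dicke (fst x) (snd x) y * cnj (dicke (fst x) (snd x) y)))"
    by (simp add: sum.swap[of _ "bip d"] sum_distrib_left)
  also have "\<dots> = (\<Sum>x\<in>?S. complex_of_real (p (fst x) (snd x)))"
    by (intro sum.cong refl) (auto simp: dicke_norm)
  also have "\<dots> = complex_of_real (\<Sum>x\<in>?S. p (fst x) (snd x))"
    by simp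
  also have "(\<Sum>x\<in>?S. p (fst x) (snd x)) = 1"
    using p by (simp add: ds_coeffs_def case_prod_beta)
  finally show ?thesis by simp
qed

lemma sep_from_family:
  fixes L :: "'l set" and w :: "'l \<Rightarrow> real" and RA RB :: "'l \<Rightarrow> nat \<Rightarrow> nat \<Rightarrow> complex"
  assumes fin: "finite L"
    and st: "\<forall>t\<in>L. w t \<ge> 0 \<and> is_state_on {..<d} (RA t) \<and> is_state_on {..<d} (RB t)"
    and eq: "\<forall>i<d. \<forall>j<d. \<forall>k<d. \<forall>l<d. A (i, j) (k, l) = (\<Sum>t\<in>L. complex_of_real (w t) * RA t i k * RB t j l)"
    and tr: "(\<Sum>i<d. \<Sum>j<d. A (i, j) (i, j)) = 1"
  shows "separable d A"
proof -
  have trA: "(\<Sum>i<d. RA t i i) = 1" "(\<Sum>j<d. RB t j j) = 1" if "t \<in> L" for t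
    using st that by (auto simp: is_state_on_def)
  have "(1::complex) = (\<Sum>i<d. \<Sum>j<d. \<Sum>t\<in>L. complex_of_real (w t) * RA t i i * RB t j j)"
    using tr eq by simp
  also have "\<dots> = (\<Sum>i<d. \<Sum>t\<in>L. \<Sum>j<d. complex_of_real (w t) * RA t i i * RB t j j)"
    by (intro sum.cong refl) (rule sum.swap)
  also have "\<dots> = (\<Sum>t\<in>L. \<Sum>i<d. \<Sum>j<d. complex_of_real (w t) * RA t i i * RB t j j)"
    by (rule sum.swap)
  also have "\<dots> = (\<Sum>t\<in>L. complex_of_real (w t) * (\<Sum>i<d. RA t i i) * (\<Sum>j<d. RB t j j))"
  proof (intro sum.cong refl)
    fix t
    have "complex_of_real (w t) * (\<Sum>i<d. RA t i i) * (\<Sum>j<d. RB t j j)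
       = complex_of_real (w t) * (\<Sum>i<d. \<Sum>j<d. RA t i i * RB t j j)"
      by (simp only: mult.assoc sum_product)
    also have "\<dots> = (\<Sum>i<d. \<Sum>j<d. complex_of_real (w t) * (RA t i i * RB t j j))"
      by (simp add: sum_distrib_left)
    finally show "(\<Sum>i<d. \<Sum>j<d. complex_of_real (w t) * RA t i i * RB t j j)
       = complex_of_real (w t) * (\<Sum>i<d. RA t i i) * (\<Sum>j<d. RB t j j)"
      by (simp add: mult.assoc)
  qed
  also have "\<dots> = (\<Sum>t\<in>L. complex_of_real (w t))"
    by (intro sum.cong refl) (simp add: trA)
  finally have "complex_of_real (\<Sum>t\<in>L. w t) = 1" by simp
  then have sw: "(\<Sum>t\<in>L. w t) = 1" using of_real_eq_1_iff by blast
  obtain h where h: "bij_betw h {0..<card L} L" using ex_bij_betw_nat_finite[OF fin] by blast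
  have hL: "h m \<in> L" if "m < card L" for m using h that by (auto simp: bij_betw_def)
  have ri: "(\<Sum>m<card L. g (h m)) = (\<Sum>t\<in>L. g t)" for g :: "'l \<Rightarrow> 'b::comm_monoid_add"
    using sum.reindex_bij_betw[OF h, of g] by (simp add: atLeast0LessThan)
  have c1: "\<forall>m<card L. 0 \<le> (w \<circ> h) m \<and> is_state_on {..<d} ((RA \<circ> h) m) \<and> is_state_on {..<d} ((RB \<circ> h) m)"
    using st hL by auto
  have c2: "(\<Sum>m<card L. (w \<circ> h) m) = 1" using ri[of w] sw by simp
  have c3: "\<forall>i<d. \<forall>j<d. \<forall>k<d. \<forall>l<d. A (i, j) (k, l) = (\<Sum>m<card L. complex_of_real ((w \<circ> h) m) * (RA \<circ> h) m i k * (RB \<circ> h) m j l)"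
  proof (intro allI impI)
    fix i j k l assume "i < d" "j < d" "k < d" "l < d"
    then show "A (i, j) (k, l) = (\<Sum>m<card L. complex_of_real ((w \<circ> h) m) * (RA \<circ> h) m i k * (RB \<circ> h) m j l)"
      using eq ri[of "\<lambda>t. complex_of_real (w t) * RA t i k * RB t j l"] by simp
  qed
  show ?thesis unfolding separable_def
    by (rule exI[of _ "card L"], rule exI[of _ "w \<circ> h"], rule exI[of _ "RA \<circ> h"], rule exI[of _ "RB \<circ> h"])
      (use c1 c2 c3 in simp)
qed

lemma cp_from_family:
  fixes L :: "'l set" and b :: "'l \<Rightarrow> nat \<Rightarrow> real"
  assumes fin: "finite L" and nn: "\<forall>t\<in>L. \<forall>i<d. b t i \<ge> 0"
    and eq: "\<forall>i<d. \<forall>j<d. M i j = (\<Sum>t\<in>L. b t i * b t j)"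
  shows "completely_positive d M"
proof -
  obtain h where h: "bij_betw h {0..<card L} L" using ex_bij_betw_nat_finite[OF fin] by blast
  have hL: "h m \<in> L" if "m < card L" for m using h that by (auto simp: bij_betw_def)
  have ri: "(\<Sum>m<card L. g (h m)) = (\<Sum>t\<in>L. g t)" for g :: "'l \<Rightarrow> real"
    using sum.reindex_bij_betw[OF h, of g] by (simp add: atLeast0LessThan)
  have c1: "\<forall>i<d. \<forall>l<card L. 0 \<le> b (h l) i" using nn hL by auto
  have c2: "\<forall>i<d. \<forall>j<d. M i j = (\<Sum>l<card L. b (h l) i * b (h l) j)"
  proof (intro allI impI)
    fix i j assume "i < d" "j < d"
    then show "M i j = (\<Sum>l<card L. b (h l) i * b (h l) j)"
      using eq ri[of "\<lambda>t. b t i * b t j"] by simp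
  qed
  show ?thesis unfolding completely_positive_def
    by (rule exI[of _ "card L"], rule exI[of _ "\<lambda>i l. b (h l) i"]) (use c1 c2 in simp)
qed

lemma sum_at:
  assumes "j0 < (d::nat)" "\<And>j. j < d \<Longrightarrow> j \<noteq> j0 \<Longrightarrow> F j = 0"
  shows "(\<Sum>j<d. F j) = F j0"
  using assms by (intro sum_single) auto

lemma S1:
  assumes "a < (d::nat)"
  shows "(\<Sum>i<d. \<Sum>j<d. if i = j \<and> a = i \<and> c = i then f i else 0) = (if a = c then f a else (0::real))"
proof -
  have "(\<Sum>j<d. if i = j \<and> a = i \<and> c = i then f i else 0) = (if a = i \<and> c = i then f i else 0)" if "i < d" for i
    using that by (subst sum_at[of i]) auto
  then have "(\<Sum>i<d. \<Sum>j<d. if i = j \<and> a = i \<and> c = i then f i else 0) = (\<Sum>i<d. if a = i \<and> c = i then f i else 0)"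
    by simp
  also have "\<dots> = (if a = c then f a else 0)"
    using assms by (subst sum_at[of a]) auto
  finally show ?thesis .
qed

lemma S2:
  assumes "a < (d::nat)" "c < d"
  shows "(\<Sum>i<d. \<Sum>j<d. if i \<noteq> j \<and> a = i \<and> c = j then f i j else 0) = (if a \<noteq> c then f a c else (0::real))"
proof -
  have "(\<Sum>j<d. if i \<noteq> j \<and> a = i \<and> c = j then f i j else 0) = (if i \<noteq> c \<and> a = i then f i c else 0)" if "i < d" for i
    using assms by (subst sum_at[of c]) auto
  then have "(\<Sum>i<d. \<Sum>j<d. if i \<noteq> j \<and> a = i \<and> c = j then f i j else 0) = (\<Sum>i<d. if i \<noteq> c \<and> a = i then f i c else 0)"
    by simp
  also have "\<dots> = (if a \<noteq> c then f a c else 0)"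
    using assms by (subst sum_at[of a]) auto
  finally show ?thesis .
qed

lemma S3:
  assumes "a < (d::nat)" "c < d"
  shows "(\<Sum>i<d. \<Sum>j<d. if i \<noteq> j \<and> a = j \<and> c = i then f i j else 0) = (if a \<noteq> c then f c a else (0::real))"
proof -
  have "(\<Sum>j<d. if i \<noteq> j \<and> a = j \<and> c = i then f i j else 0) = (if i \<noteq> a \<and> c = i then f i a else 0)" if "i < d" for i
    using assms by (subst sum_at[of a]) auto
  then have "(\<Sum>i<d. \<Sum>j<d. if i \<noteq> j \<and> a = j \<and> c = i then f i j else 0) = (\<Sum>i<d. if i \<noteq> a \<and> c = i then f i a else 0)"
    by simp
  also have "\<dots> = (if a \<noteq> c then f c a else 0)"
    using assms by (subst sum_at[of c]) auto
  finally show ?thesis .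
qed

lemma sum_skip:
  assumes "a < (d::nat)"
  shows "(\<Sum>j<d. if j \<noteq> a then g j else 0) = (\<Sum>j\<in>{..<d} - {a}. (g j :: real))"
proof -
  have "(\<Sum>j<d. if j \<noteq> a then g j else 0) = (if a \<noteq> a then g a else 0) + (\<Sum>j\<in>{..<d} - {a}. if j \<noteq> a then g j else 0)"
    using assms by (subst sum.remove[of _ a]) auto
  also have "(\<Sum>j\<in>{..<d} - {a}. if j \<noteq> a then g j else 0) = (\<Sum>j\<in>{..<d} - {a}. g j)"
    by (rule sum.cong) auto
  finally show ?thesis by simp
qed

lemma S4:
  assumes "a < (d::nat)"
  shows "(\<Sum>i<d. \<Sum>j<d. if i \<noteq> j \<and> a = c \<and> a = i then f i j else 0) = (if a = c then (\<Sum>j\<in>{..<d} - {a}. f a j) else (0::real))"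
proof -
  have "(\<Sum>i<d. \<Sum>j<d. if i \<noteq> j \<and> a = c \<and> a = i then f i j else 0)
      = (\<Sum>j<d. if a \<noteq> j \<and> a = c \<and> a = a then f a j else 0)"
    using assms by (subst sum_at[of a]) auto
  also have "\<dots> = (if a = c then (\<Sum>j<d. if j \<noteq> a then f a j else 0) else 0)"
    by (auto intro: sum.cong)
  finally show ?thesis using sum_skip[OF assms, of "f a"] by (cases "a = c") simp_all
qed

lemma S5:
  assumes "a < (d::nat)"
  shows "(\<Sum>i<d. \<Sum>j<d. if i \<noteq> j \<and> a = c \<and> a = j then f i j else 0) = (if a = c then (\<Sum>i\<in>{..<d} - {a}. f i a) else (0::real))"
proof -
  have "(\<Sum>j<d. if i \<noteq> j \<and> a = c \<and> a = j then f i j else 0) = (if i \<noteq> a then (if a = c then f i a else 0) else 0)" if "i < d" for i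
    using assms by (subst sum_at[of a]) auto
  then have "(\<Sum>i<d. \<Sum>j<d. if i \<noteq> j \<and> a = c \<and> a = j then f i j else 0)
      = (\<Sum>i<d. if i \<noteq> a then (if a = c then f i a else 0) else 0)"
    by simp
  also have "\<dots> = (\<Sum>i\<in>{..<d} - {a}. if a = c then f i a else 0)" using assms by (rule sum_skip)
  finally show ?thesis by simp
qed

theorem theorem6:
  fixes d :: nat and p :: "nat \<Rightarrow> nat \<Rightarrow> real" and x :: "nat \<Rightarrow> real" and lam :: real
  assumes "d \<ge> 2"
    and "ds_coeffs d p"
    and "PPT d (ds_rho d p)"
    and "\<forall>i<d. x i > 0"
    and "0 \<le> lam" and "lam < 1"
    and "\<forall>i<d. \<forall>j<d. lam \<le> assoc_mat p i j * (\<Sum>k<d. x k)^2 / (x i * x j)"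
    and "in_range d (assoc_mat p) (\<lambda>i. x i / (\<Sum>k<d. x k))"
    and "lam \<le> 1 / (\<Sum>i<d. \<Sum>j<d. (x i / (\<Sum>k<d. x k)) * pinv d (assoc_mat p) i j * (x j / (\<Sum>k<d. x k)))"
    and "\<forall>i<d. lam * x i * ((\<Sum>k<d. x k) - 2 * x i) \<ge>
           (\<Sum>k<d. x k)^2 * ((\<Sum>j\<in>{..<d} - {i}. assoc_mat p i j) - assoc_mat p i i)"
  shows "separable d (ds_rho d p) \<and> completely_positive d (assoc_mat p)"
proof -
  note dsc = assms(2)
  note xpos = assms(4)
  note lam0 = assms(5)
  note h7 = assms(7)
  note h10 = assms(10)
  have d0: "0 < d" using assms(1) by simp
  define s where "s = (\<Sum>k<d. x k)"
  define u where "u i = x i / s" for i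
  define M where "M = assoc_mat p"
  define N where "N a c = M a c - lam * u a * u c" for a c
  define r where "r a = N a a - (\<Sum>c\<in>{..<d} - {a}. N a c)" for a
  define vec where "vec t a = (if t = (d, d) then sqrt lam * u a
      else if fst t = snd t then (if a = fst t then sqrt (r (fst t)) else 0)
      else (if a = fst t \<or> a = snd t then sqrt (N (fst t) (snd t) / 2) else 0))" for t a
  define L where "L = insert (d, d) (bip d)"
  have spos: "s > 0" unfolding s_def using d0 xpos by (intro sum_pos) auto
  have upos: "u a > 0" if "a < d" for a using xpos that spos by (simp add: u_def)
  have usum: "(\<Sum>a<d. u a) = 1" using spos by (simp add: u_def s_def sum_divide_distrib[symmetric])
  have psym: "p a b = p b a" for a b using dsc by (simp add: ds_coeffs_def)
  have Msym: "M a c = M c a" for a c by (simp add: M_def assoc_mat_def psym)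
  have Nsym: "N a c = N c a" for a c by (simp add: N_def Msym mult_ac)
  have Nnn: "N a c \<ge> 0" if "a < d" "c < d" for a c
  proof -
    have xa: "x a > 0" "x c > 0" using xpos that by auto
    have "lam \<le> M a c * s^2 / (x a * x c)" using h7 that by (simp add: M_def s_def)
    then have "lam * (x a * x c) \<le> M a c * s^2" using xa by (simp add: le_divide_eq)
    then have "lam * (x a * x c) / s^2 \<le> M a c" using spos by (simp add: divide_le_eq)
    moreover have "lam * u a * u c = lam * (x a * x c) / s^2" by (simp add: u_def power2_eq_square)
    ultimately show ?thesis by (simp add: N_def)
  qed
  have rnn: "r a \<ge> 0" if a: "a < d" for a
  proof -
    have us: "(\<Sum>c\<in>{..<d} - {a}. u c) = 1 - u a"
      using usum sum.remove[of "{..<d}" a u] a by simp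
    have "(\<Sum>c\<in>{..<d} - {a}. N a c) = (\<Sum>c\<in>{..<d} - {a}. M a c) - lam * u a * (\<Sum>c\<in>{..<d} - {a}. u c)"
      by (simp add: N_def sum_subtractf sum_distrib_left mult.assoc)
    then have rr: "r a = M a a - (\<Sum>c\<in>{..<d} - {a}. M a c) + lam * u a * (1 - 2 * u a)"
      by (simp add: r_def N_def us algebra_simps power2_eq_square)
    have xa: "x a = u a * s" using spos by (simp add: u_def)
    have "s^2 * ((\<Sum>c\<in>{..<d} - {a}. M a c) - M a a) \<le> lam * x a * (s - 2 * x a)"
      using h10 a by (simp add: M_def s_def)
    also have "\<dots> = s^2 * (lam * u a * (1 - 2 * u a))" by (simp add: xa algebra_simps power2_eq_square)
    finally have "(\<Sum>c\<in>{..<d} - {a}. M a c) - M a a \<le> lam * u a * (1 - 2 * u a)"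
      using spos by (simp add: mult_le_cancel_left_pos)
    then show ?thesis using rr by simp
  qed
  have vnn: "\<forall>t\<in>L. \<forall>a<d. vec t a \<ge> 0"
    using lam0 upos rnn Nnn by (auto simp: vec_def L_def less_imp_le)
  have pw: "vec (i, j) a * vec (i, j) c =
      (if i = j \<and> a = i \<and> c = i then r i else 0) +
      (if i \<noteq> j \<and> a = i \<and> c = j then N i j / 2 else 0) +
      (if i \<noteq> j \<and> a = j \<and> c = i then N i j / 2 else 0) +
      (if i \<noteq> j \<and> a = c \<and> a = i then N i j / 2 else 0) +
      (if i \<noteq> j \<and> a = c \<and> a = j then N i j / 2 else 0)" if ij: "i < d" "j < d" for i j a c
  proof -
    have sq1: "sqrt (r i) * sqrt (r i) = r i" using rnn[OF ij(1)] by simp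
    have sq2: "sqrt (N i j / 2) * sqrt (N i j / 2) = N i j / 2" using Nnn[OF ij] by simp
    have ne: "(i, j) \<noteq> (d, d)" using ij by simp
    show ?thesis
    proof (cases "i = j")
      case True
      then show ?thesis using ne sq1 by (simp add: vec_def)
    next
      case False
      then show ?thesis using ne sq2 by (auto simp: vec_def)
    qed
  qed
  have decomp: "\<forall>a<d. \<forall>c<d. M a c = (\<Sum>t\<in>L. vec t a * vec t c)"
  proof (intro allI impI)
    fix a c assume a: "a < d" and c: "c < d"
    have "(\<Sum>t\<in>L. vec t a * vec t c) = vec (d, d) a * vec (d, d) c + (\<Sum>t\<in>bip d. vec t a * vec t c)"
      unfolding L_def by (subst sum.insert) auto
    also have "vec (d, d) a * vec (d, d) c = lam * u a * u c"
      using lam0 by (simp add: vec_def mult_ac)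
    also have "(\<Sum>t\<in>bip d. vec t a * vec t c) = (\<Sum>i<d. \<Sum>j<d. vec (i, j) a * vec (i, j) c)"
      by (simp add: sum.cartesian_product)
    also have "\<dots> = (\<Sum>i<d. \<Sum>j<d.
      (if i = j \<and> a = i \<and> c = i then r i else 0) +
      (if i \<noteq> j \<and> a = i \<and> c = j then N i j / 2 else 0) +
      (if i \<noteq> j \<and> a = j \<and> c = i then N i j / 2 else 0) +
      (if i \<noteq> j \<and> a = c \<and> a = i then N i j / 2 else 0) +
      (if i \<noteq> j \<and> a = c \<and> a = j then N i j / 2 else 0))"
      by (intro sum.cong refl) (simp add: pw)
    also have "\<dots> = (if a = c then r a else 0) + (if a \<noteq> c then N a c / 2 else 0)
       + (if a \<noteq> c then N c a / 2 else 0)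
       + (if a = c then (\<Sum>j\<in>{..<d} - {a}. N a j / 2) else 0)
       + (if a = c then (\<Sum>i\<in>{..<d} - {a}. N i a / 2) else 0)"
      by (simp only: sum.distrib S1[OF a] S2[OF a c] S3[OF a c] S4[OF a] S5[OF a])
    also have "lam * u a * u c + \<dots> = M a c"
    proof (cases "a = c")
      case True
      have "(\<Sum>i\<in>{..<d} - {a}. N i a / 2) = (\<Sum>i\<in>{..<d} - {a}. N a i / 2)"
        by (simp add: Nsym)
      moreover have "(\<Sum>j\<in>{..<d} - {a}. N a j / 2) + (\<Sum>j\<in>{..<d} - {a}. N a j / 2) = (\<Sum>j\<in>{..<d} - {a}. N a j)"
        by (simp add: sum_divide_distrib[symmetric])
      ultimately show ?thesis using True by (simp add: r_def N_def)
    next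
      case False
      then show ?thesis by (simp add: N_def Msym mult_ac)
    qed
    finally show "M a c = (\<Sum>t\<in>L. vec t a * vec t c)" by simp
  qed
  have cp: "completely_positive d M"
    by (rule cp_from_family[where L = L and b = vec]) (use vnn decomp in \<open>auto simp: L_def\<close>)
  have finL: "finite L" by (simp add: L_def)
  define w where "w q = (\<Sum>t<d. vec (fst q) t)^2 / 4^d" for q :: "(nat \<times> nat) \<times> nat"
  define R where "R q = phst d (vec (fst q)) (snd q)" for q :: "(nat \<times> nat) \<times> nat"
  have sep: "separable d (ds_rho d p)"
  proof (rule sep_from_family[where L = "L \<times> {..<(4::nat)^d}" and w = w and RA = R and RB = R])
    show "finite (L \<times> {..<(4::nat)^d})" using finL by simp
    show "\<forall>t\<in>L \<times> {..<(4::nat)^d}. 0 \<le> w t \<and> is_state_on {..<d} (R t) \<and> is_state_on {..<d} (R t)"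
      using vnn d0 by (auto simp: w_def R_def intro!: phst_state)
    show "(\<Sum>i<d. \<Sum>j<d. ds_rho d p (i, j) (i, j)) = 1" by (rule ds_trace[OF dsc])
    show "\<forall>i<d. \<forall>j<d. \<forall>k<d. \<forall>l<d. ds_rho d p (i, j) (k, l) =
       (\<Sum>t\<in>L \<times> {..<(4::nat)^d}. complex_of_real (w t) * R t i k * R t j l)"
    proof (intro allI impI)
      fix i j k l assume idx: "i < d" "j < d" "k < d" "l < d"
      let ?I = "(if (k = i \<and> l = j) \<or> (k = j \<and> l = i) then 1 else 0) :: complex"
      have "ds_rho d p (i, j) (k, l) = complex_of_real (M i j) * ?I"
        using ds_entry[OF dsc idx] by (simp add: M_def)
      also have "\<dots> = (\<Sum>t\<in>L. complex_of_real (vec t i * vec t j) * ?I)"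
        using decomp idx by (simp add: sum_distrib_right)
      also have "\<dots> = (\<Sum>t\<in>L. \<Sum>m<4^d. complex_of_real ((\<Sum>a<d. vec t a)^2 / 4^d) *
            phst d (vec t) m i k * phst d (vec t) m j l)"
        using vnn idx by (intro sum.cong refl rank1_decomp[symmetric]) auto
      also have "\<dots> = (\<Sum>q\<in>L \<times> {..<(4::nat)^d}. complex_of_real (w q) * R q i k * R q j l)"
        by (simp add: sum.cartesian_product w_def R_def case_prod_beta)
      finally show "ds_rho d p (i, j) (k, l) =
       (\<Sum>t\<in>L \<times> {..<(4::nat)^d}. complex_of_real (w t) * R t i k * R t j l)" .
    qed
  qed
  show ?thesis using cp sep by (simp add: M_def)
qed

end
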